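(* Let $A$ be a meet-complemented lattice in which $\Box x$ and $\Diamond x$ exist for every $x\in A$. Suppose that for every $a\in A$ the infimum $\bigwedge\{\Box^n a: n\in\mathbb{N}\}$ exists in $A$ (where $\Box^0 a=a$). Then for every $a\in A$, the set $\{b\in A: b\le a \text{ and } b\vee\neg b=1\}$ has a maximum $Ba$, and $Ba=\bigwedge\{\Box^n a: n\in\mathbb{N}\}$.
   Context: A meet-complemented lattice is a lattice $(L,\le)$ (not necessarily distributive) such that for every $a\in L$ the element $\neg a=\max\{b\in L: a\wedge b\le c\ \text{for all } c\in L\}$ exists; it is bounded with bottom $0$ and top $1$. For $a\in L$, $\Box a=\max\{b\in L: a\vee\neg b=1\}$ and $\Diamond a=\min\{b\in L: \neg a\vee b=1\}$. $\mathbb{N}$ includes $0$. $Ba$ denotes the greatest Boolean element (element $b$ with $b\vee\neg b=1$) below $a$. *)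

theory Defs
  imports Main
begin

definition is_max :: "'a::order set \<Rightarrow> 'a \<Rightarrow> bool" where
  "is_max S m \<longleftrightarrow> m \<in> S \<and> (\<forall>x\<in>S. x \<le> m)"

definition is_min :: "'a::order set \<Rightarrow> 'a \<Rightarrow> bool" where
  "is_min S m \<longleftrightarrow> m \<in> S \<and> (\<forall>x\<in>S. m \<le> x)"

definition is_inf :: "'a::order set \<Rightarrow> 'a \<Rightarrow> bool" where
  "is_inf S m \<longleftrightarrow> (\<forall>x\<in>S. m \<le> x) \<and> (\<forall>y. (\<forall>x\<in>S. y \<le> x) \<longrightarrow> y \<le> m)"

definition meet_complemented :: "'a::bounded_lattice itself \<Rightarrow> bool" where
  "meet_complemented _ \<longleftrightarrow> (\<forall>a::'a. \<exists>m. is_max {b. \<forall>c. inf a b \<le> c} m)"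

definition mneg :: "'a::bounded_lattice \<Rightarrow> 'a" where
  "mneg a = (THE m. is_max {b. \<forall>c. inf a b \<le> c} m)"

definition mbox :: "'a::bounded_lattice \<Rightarrow> 'a" where
  "mbox a = (THE m. is_max {b. sup a (mneg b) = top} m)"

definition mdia :: "'a::bounded_lattice \<Rightarrow> 'a" where
  "mdia a = (THE m. is_min {b. sup (mneg a) b = top} m)"

end

theory Submission
  imports Defs
begin

lemma is_max_unique: "is_max S m \<Longrightarrow> is_max S m' \<Longrightarrow> m = (m'::'a::order)"
  unfolding is_max_def by (meson order.antisym)

lemma is_min_unique: "is_min S m \<Longrightarrow> is_min S m' \<Longrightarrow> m = (m'::'a::order)"
  unfolding is_min_def by (meson order.antisym)

lemma the_max: "\<exists>m. is_max S m \<Longrightarrow> is_max S (THE m. is_max S (m::'a::order))"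
  by (metis theI is_max_unique)

lemma the_min: "\<exists>m. is_min S m \<Longrightarrow> is_min S (THE m. is_min S (m::'a::order))"
  by (metis theI is_min_unique)

theorem proposition12:
  assumes mc: "meet_complemented TYPE('a::bounded_lattice)"
    and box_ex: "\<forall>x::'a. \<exists>m. is_max {b. sup x (mneg b) = top} m"
    and dia_ex: "\<forall>x::'a. \<exists>m. is_min {b. sup (mneg x) b = top} m"
    and inf_ex: "\<forall>a::'a. \<exists>m. is_inf {(mbox ^^ n) a | n. True} m"
  shows "\<forall>a::'a. \<exists>Ba. is_max {b. b \<le> a \<and> sup b (mneg b) = top} Ba
                       \<and> is_inf {(mbox ^^ n) a | n. True} Ba"
proof
  have neg: "is_max {b. \<forall>c. inf x b \<le> c} (mneg x)" for x :: 'a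
    unfolding mneg_def using mc unfolding meet_complemented_def by (intro the_max) blast
  have negbot: "inf x (mneg x) = bot" for x :: 'a
    using neg[of x] unfolding is_max_def by (metis bot_unique mem_Collect_eq)
  have negle: "inf x b = bot \<Longrightarrow> b \<le> mneg x" for x b :: 'a
  proof -
    assume h: "inf x b = bot"
    have "b \<in> {b. \<forall>c. inf x b \<le> c}" using h bot_least by (simp; blast)
    thus ?thesis using neg[of x] unfolding is_max_def by blast
  qed
  have anti: "x \<le> y \<Longrightarrow> mneg y \<le> mneg x" for x y :: 'a
  proof -
    assume "x \<le> y"
    hence "inf x (mneg y) \<le> inf y (mneg y)" by (rule inf_mono) simp
    hence "inf x (mneg y) = bot" using negbot[of y] by (simp add: bot_unique)
    thus ?thesis by (rule negle)
  qed
  have box: "is_max {b. sup x (mneg b) = top} (mbox x)" for x :: 'a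
    unfolding mbox_def using box_ex by (intro the_max) blast
  have dia: "is_min {b. sup (mneg x) b = top} (mdia x)" for x :: 'a
    unfolding mdia_def using dia_ex by (intro the_min) blast
  fix a :: 'a
  let ?S = "{(mbox ^^ n) a | n. True}"
  obtain m where m: "is_inf ?S m" using inf_ex by blast
  have mle: "m \<le> (mbox ^^ n) a" for n using m unfolding is_inf_def by blast
  have mgr: "(\<And>n. y \<le> (mbox ^^ n) a) \<Longrightarrow> y \<le> m" for y using m unfolding is_inf_def by blast
  have "sup (mneg m) ((mbox ^^ n) a) = top" for n
  proof -
    have 1: "sup ((mbox ^^ n) a) (mneg ((mbox ^^ Suc n) a)) = top"
      using box[of "(mbox ^^ n) a"] unfolding is_max_def by simp
    have "mneg ((mbox ^^ Suc n) a) \<le> mneg m" using anti mle by blast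
    hence "top \<le> sup (mneg m) ((mbox ^^ n) a)" using 1
      by (metis le_supI le_supI1 sup_ge1 sup_commute)
    thus ?thesis by (simp add: top_unique)
  qed
  hence "mdia m \<le> (mbox ^^ n) a" for n using dia[of m] unfolding is_min_def by simp
  hence dm: "mdia m \<le> m" using mgr by blast
  have "sup (mneg m) (mdia m) = top" using dia[of m] unfolding is_min_def by simp
  hence bm: "sup m (mneg m) = top"
    by (metis dm sup_commute sup_mono order_refl top_unique)
  have ub: "b \<le> m" if "b \<le> a" "sup b (mneg b) = top" for b
  proof (rule mgr)
    fix n show "b \<le> (mbox ^^ n) a"
    proof (induction n)
      case 0 then show ?case using that by simp
    next
      case (Suc n)
      have "sup ((mbox ^^ n) a) (mneg b) = top"
        using Suc that(2) by (metis sup_mono order_refl top_unique)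
      thus ?case using box[of "(mbox ^^ n) a"] unfolding is_max_def by simp
    qed
  qed
  have "m \<le> a" using mle[of 0] by simp
  hence "is_max {b. b \<le> a \<and> sup b (mneg b) = top} m" unfolding is_max_def using bm ub by blast
  thus "\<exists>Ba. is_max {b. b \<le> a \<and> sup b (mneg b) = top} Ba \<and> is_inf ?S Ba" using m by blast
qed

end
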